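(* Let $\lambda\in\mathbb{R}$, let $$J_5=\begin{pmatrix}\lambda&1&0\\0&\lambda&0\\0&0&\lambda\end{pmatrix},$$ and $h>0$. If $\psi,\phi,\theta$ are any real numbers with $\phi\neq 0$, $1-\phi\lambda\theta\neq 0$ and $$\frac{\psi+\phi\lambda(1-\theta)}{1-\phi\lambda\theta}=e^{\lambda h},\qquad \phi\,\frac{1-\theta+\psi\theta}{(1-\phi\lambda\theta)^2}=he^{\lambda h},$$ then the difference scheme $$\frac{\mathbf{x}_{k+1}-\psi\mathbf{x}_k}{\phi}=J_5\big[\theta\mathbf{x}_{k+1}+(1-\theta)\mathbf{x}_k\big]$$ is exact for the system $\mathbf{x}'=J_5\mathbf{x}$.
   Context: A one-step difference scheme with step size $h>0$ for $\mathbf{x}'=M\mathbf{x}$ is called exact if for every initial vector $\mathbf{x}_0$ the sequence $(\mathbf{x}_k)$ it generates satisfies $\mathbf{x}_k=\mathbf{x}(kh)$ for all $k\ge 0$, where $\mathbf{x}(t)$ solves $\mathbf{x}'=M\mathbf{x}$, $\mathbf{x}(0)=\mathbf{x}_0$. *)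

theory Defs
  imports "HOL-Analysis.Analysis"
begin

text \<open>The 3x3 matrix J5 (rows: (l,1,0), (0,l,0), (0,0,l)).\<close>
definition J5 :: "real \<Rightarrow> real^3^3" where
  "J5 l = (\<chi> i j. if i = j then l else if i = 1 \<and> j = 2 then 1 else 0)"

text \<open>x solves x' = M x on all of R with x(0) = x0.\<close>
definition ode_solution :: "real^'n^'n \<Rightarrow> real^'n \<Rightarrow> (real \<Rightarrow> real^'n) \<Rightarrow> bool" where
  "ode_solution M x0 x \<longleftrightarrow> x 0 = x0 \<and> (\<forall>t. (x has_vector_derivative (M *v x t)) (at t))"

text \<open>A sequence generated by the theta-type scheme
  (x_{k+1} - psi x_k)/phi = M (theta x_{k+1} + (1-theta) x_k).\<close>
definition theta_scheme_seq ::
  "real \<Rightarrow> real \<Rightarrow> real \<Rightarrow> real^'n^'n \<Rightarrow> (nat \<Rightarrow> real^'n) \<Rightarrow> bool" where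
  "theta_scheme_seq \<psi> \<phi> \<theta> M xs \<longleftrightarrow>
     (\<forall>k. (1 / \<phi>) *\<^sub>R (xs (Suc k) - \<psi> *\<^sub>R xs k)
          = M *v (\<theta> *\<^sub>R xs (Suc k) + (1 - \<theta>) *\<^sub>R xs k))"

text \<open>Exactness of a one-step scheme (given as a predicate on generated sequences)
  with step size h for x' = M x: for every initial vector the scheme generates a sequence,
  the IVP has a solution, and every generated sequence agrees with the solution at kh.\<close>
definition exact_scheme ::
  "((nat \<Rightarrow> real^'n) \<Rightarrow> bool) \<Rightarrow> real \<Rightarrow> real^'n^'n \<Rightarrow> bool" where
  "exact_scheme gen h M \<longleftrightarrow>
     (\<forall>x0. (\<exists>x. ode_solution M x0 x) \<and> (\<exists>xs. xs 0 = x0 \<and> gen xs) \<and>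
       (\<forall>xs x. xs 0 = x0 \<and> gen xs \<and> ode_solution M x0 x \<longrightarrow>
          (\<forall>k. xs k = x (real k * h))))"

end

theory Submission
  imports Defs
begin

lemma J5_mult:
  "(J5 l *v x) $ 1 = l * x$1 + x$2" "(J5 l *v x) $ 2 = l * x$2" "(J5 l *v x) $ 3 = l * x$3"
  by (simp_all add: J5_def matrix_vector_mult_def sum_3)

lemma comp_deriv:
  assumes "(x has_vector_derivative v) (at t)"
  shows "((\<lambda>t. x t $ i) has_real_derivative v $ i) (at t)"
  unfolding has_real_derivative_iff_has_vector_derivative
  using bounded_linear.has_vector_derivative[OF bounded_linear_vec_nth assms] .

lemma const_of_deriv0:
  fixes g :: "real \<Rightarrow> real"
  assumes "\<And>t. (g has_real_derivative 0) (at t)"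
  shows "g t = g 0"
  using DERIV_isconst_all assms by blast

lemma ode_unique:
  assumes "ode_solution (J5 l) x0 x"
  shows "x t = exp (l * t) *\<^sub>R x0 + (t * exp (l * t)) *\<^sub>R (\<chi> i. if i = 1 then x0$2 else 0)"
proof -
  have x0: "x 0 = x0" and D: "\<And>t. (x has_vector_derivative (J5 l *v x t)) (at t)"
    using assms by (auto simp: ode_solution_def)
  have d: "\<And>t i. ((\<lambda>t. x t $ i) has_real_derivative (J5 l *v x t) $ i) (at t)"
    using comp_deriv[OF D] .
  have c23: "x s $ i = exp (l * s) * x0 $ i" if "i = 2 \<or> i = 3" for i s
  proof -
    have "\<And>t. ((\<lambda>t. exp (-(l * t)) * x t $ i) has_real_derivative 0) (at t)"
    proof -
      fix t
      have "((\<lambda>t. exp (-(l * t)) * x t $ i) has_real_derivative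
          (exp (-(l * t)) * (-(l * 1))) * x t $ i + exp (-(l * t)) * ((J5 l *v x t) $ i)) (at t)"
        by (auto intro!: derivative_eq_intros d)
      moreover have "(J5 l *v x t) $ i = l * x t $ i" using that J5_mult by auto
      ultimately show "((\<lambda>t. exp (-(l * t)) * x t $ i) has_real_derivative 0) (at t)"
        by (simp add: algebra_simps)
    qed
    from const_of_deriv0[OF this, of s] have "exp (-(l * s)) * x s $ i = x0 $ i" using x0 by simp
    then show ?thesis by (metis exp_minus_inverse mult.assoc mult.commute mult_1)
  qed
  have c1: "x s $ 1 = exp (l * s) * (x0 $ 1 + s * x0 $ 2)" for s
  proof -
    have "\<And>t. ((\<lambda>t. exp (-(l * t)) * x t $ 1 - t * x0 $ 2) has_real_derivative 0) (at t)"
    proof -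
      fix t
      have H: "((\<lambda>t. exp (-(l * t)) * x t $ 1 - t * x0 $ 2) has_real_derivative
          (exp (-(l * t)) * (-(l * 1))) * x t $ 1 + exp (-(l * t)) * ((J5 l *v x t) $ 1) - 1 * x0 $ 2) (at t)"
        by (auto intro!: derivative_eq_intros d)
      have e: "exp (-(l * t)) * exp (l * t) = 1" by (simp flip: exp_add)
      have "(exp (-(l * t)) * (-(l * 1))) * x t $ 1 + exp (-(l * t)) * ((J5 l *v x t) $ 1) - 1 * x0 $ 2
         = (exp (-(l * t)) * exp (l * t)) * x0 $ 2 - x0 $ 2"
        using c23 J5_mult by (simp add: algebra_simps)
      also have "\<dots> = 0" using e by simp
      finally show "((\<lambda>t. exp (-(l * t)) * x t $ 1 - t * x0 $ 2) has_real_derivative 0) (at t)"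
        using H by simp
    qed
    from const_of_deriv0[OF this, of s] have "exp (-(l * s)) * x s $ 1 - s * x0 $ 2 = x0 $ 1" using x0 by simp
    then have "x s $ 1 = exp (l * s) * (x0 $ 1 + s * x0 $ 2)"
      by (metis add_diff_cancel_left' diff_add_cancel exp_minus_inverse mult.assoc mult.commute mult_1)
    then show ?thesis .
  qed
  show ?thesis
    by (simp add: vec_eq_iff forall_3 c1 c23 algebra_simps)
qed


lemma key_scalar:
  fixes l h \<psi> \<phi> \<theta> a b :: real
  assumes "\<phi> \<noteq> 0" and D: "1 - \<phi> * l * \<theta> \<noteq> 0"
    and A4: "\<psi> + \<phi> * l * (1 - \<theta>) = E * (1 - \<phi> * l * \<theta>)"
  shows "(1/\<phi>) * (b - \<psi> * a) = l * (\<theta> * b + (1 - \<theta>) * a) + c \<longleftrightarrow>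
         b = E * a + \<phi> * c / (1 - \<phi> * l * \<theta>)"
proof -
  have "(1/\<phi>) * (b - \<psi> * a) = l * (\<theta> * b + (1 - \<theta>) * a) + c \<longleftrightarrow>
        b - \<psi> * a = \<phi> * (l * (\<theta> * b + (1 - \<theta>) * a) + c)"
    using assms(1) by (auto simp: field_simps)
  also have "\<dots> \<longleftrightarrow> (1 - \<phi> * l * \<theta>) * b = (\<psi> + \<phi> * l * (1 - \<theta>)) * a + \<phi> * c"
    by (auto simp: algebra_simps)
  also have "\<dots> \<longleftrightarrow> (1 - \<phi> * l * \<theta>) * b = (1 - \<phi> * l * \<theta>) * (E * a + \<phi> * c / (1 - \<phi> * l * \<theta>))"
  proof -
    have "(1 - \<phi> * l * \<theta>) * (E * a + \<phi> * c / (1 - \<phi> * l * \<theta>)) = E * (1 - \<phi> * l * \<theta>) * a + \<phi> * c"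
      using D by (simp add: distrib_left)
    then show ?thesis by (simp add: A4)
  qed
  also have "\<dots> \<longleftrightarrow> b = E * a + \<phi> * c / (1 - \<phi> * l * \<theta>)"
    using D by simp
  finally show ?thesis .
qed

lemma coef:
  fixes l h \<psi> \<phi> \<theta> :: real
  assumes "\<phi> \<noteq> 0" and D: "1 - \<phi> * l * \<theta> \<noteq> 0"
    and A4: "\<psi> + \<phi> * l * (1 - \<theta>) = E * (1 - \<phi> * l * \<theta>)"
    and A5: "\<phi> * ((1 - \<theta> + \<psi> * \<theta>) / (1 - \<phi> * l * \<theta>)\<^sup>2) = h * E"
  shows "\<phi> * (\<theta> * E + (1 - \<theta>)) / (1 - \<phi> * l * \<theta>) = h * E"
proof -
  have "(1 - \<phi> * l * \<theta>) * (\<theta> * E + (1 - \<theta>)) = \<theta> * (E * (1 - \<phi> * l * \<theta>)) + (1 - \<theta>) * (1 - \<phi> * l * \<theta>)"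
    by (simp add: algebra_simps)
  also have "\<dots> = 1 - \<theta> + \<psi> * \<theta>" unfolding A4[symmetric] by (simp add: algebra_simps)
  finally have "\<theta> * E + (1 - \<theta>) = (1 - \<theta> + \<psi> * \<theta>) / (1 - \<phi> * l * \<theta>)"
    using D by (simp add: field_simps)
  then have "\<phi> * (\<theta> * E + (1 - \<theta>)) / (1 - \<phi> * l * \<theta>) = \<phi> * ((1 - \<theta> + \<psi> * \<theta>) / (1 - \<phi> * l * \<theta>)\<^sup>2)"
    by (simp add: power2_eq_square)
  then show ?thesis using A5 by simp
qed


lemma scheme_step:
  fixes l h \<psi> \<phi> \<theta> :: real and u v :: "real^3"
  assumes P: "\<phi> \<noteq> 0" and D: "1 - \<phi> * l * \<theta> \<noteq> 0"
    and A4: "\<psi> + \<phi> * l * (1 - \<theta>) = E * (1 - \<phi> * l * \<theta>)"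
    and A5: "\<phi> * ((1 - \<theta> + \<psi> * \<theta>) / (1 - \<phi> * l * \<theta>)\<^sup>2) = h * E"
  shows "(1 / \<phi>) *\<^sub>R (v - \<psi> *\<^sub>R u) = J5 l *v (\<theta> *\<^sub>R v + (1 - \<theta>) *\<^sub>R u)
     \<longleftrightarrow> v $ 1 = E * u $ 1 + h * E * u $ 2 \<and> v $ 2 = E * u $ 2 \<and> v $ 3 = E * u $ 3"
proof -
  note K = key_scalar[OF P D A4]
  have K0: "(1/\<phi>) * (b - \<psi> * a) = l * (\<theta> * b + (1 - \<theta>) * a) \<longleftrightarrow> b = E * a" for a b
    using K[of b a 0] by simp
  have C: "\<phi> * (\<theta> * E + (1 - \<theta>)) / (1 - \<phi> * l * \<theta>) = h * E" by (rule coef[OF P D A4 A5])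
  have "(1 / \<phi>) *\<^sub>R (v - \<psi> *\<^sub>R u) = J5 l *v (\<theta> *\<^sub>R v + (1 - \<theta>) *\<^sub>R u)
    \<longleftrightarrow> (1/\<phi>) * (v$1 - \<psi> * u$1) = l * (\<theta> * v$1 + (1 - \<theta>) * u$1) + (\<theta> * v$2 + (1-\<theta>) * u$2)
       \<and> (1/\<phi>) * (v$2 - \<psi> * u$2) = l * (\<theta> * v$2 + (1 - \<theta>) * u$2)
       \<and> (1/\<phi>) * (v$3 - \<psi> * u$3) = l * (\<theta> * v$3 + (1 - \<theta>) * u$3)"
    by (simp add: vec_eq_iff forall_3 J5_mult algebra_simps)
  also have "\<dots> \<longleftrightarrow> v $ 1 = E * u $ 1 + h * E * u $ 2 \<and> v $ 2 = E * u $ 2 \<and> v $ 3 = E * u $ 3"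
  proof -
    have "v $ 2 = E * u $ 2 \<Longrightarrow> ((1/\<phi>) * (v$1 - \<psi> * u$1) = l * (\<theta> * v$1 + (1 - \<theta>) * u$1) + (\<theta> * v$2 + (1-\<theta>) * u$2)
       \<longleftrightarrow> v $ 1 = E * u $ 1 + h * E * u $ 2)"
    proof -
      assume v2: "v $ 2 = E * u $ 2"
      have "\<phi> * (\<theta> * v$2 + (1-\<theta>) * u$2) / (1 - \<phi> * l * \<theta>) = h * E * u$2"
        using C unfolding v2 by (metis (no_types, lifting) distrib_right mult.assoc mult.commute times_divide_eq_left)
      then show ?thesis using K[of "v$1" "u$1" "\<theta> * v$2 + (1-\<theta>) * u$2"] by simp
    qed
    then show ?thesis using K0 by blast
  qed
  finally show ?thesis .
qed

definition sol :: "real \<Rightarrow> real^3 \<Rightarrow> real \<Rightarrow> real^3" where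
  "sol l x0 t = exp (l * t) *\<^sub>R x0 + (t * exp (l * t)) *\<^sub>R (\<chi> i. if i = 1 then x0$2 else 0)"

lemma sol_ode: "ode_solution (J5 l) x0 (sol l x0)"
  unfolding ode_solution_def
proof safe
  show "sol l x0 0 = x0" by (simp add: sol_def)
  fix t
  have "(sol l x0 has_vector_derivative
     (exp (l * t) * l) *\<^sub>R x0 + (exp (l * t) + t * (exp (l * t) * l)) *\<^sub>R (\<chi> i. if i = 1 then x0$2 else 0)) (at t)"
    unfolding sol_def
    by (auto intro!: derivative_eq_intros simp: algebra_simps)
  moreover have "(exp (l * t) * l) *\<^sub>R x0 + (exp (l * t) + t * (exp (l * t) * l)) *\<^sub>R (\<chi> i. if i = 1 then x0$2 else 0)
     = J5 l *v sol l x0 t"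
    by (simp add: vec_eq_iff forall_3 J5_mult sol_def algebra_simps)
  ultimately show "(sol l x0 has_vector_derivative J5 l *v sol l x0 t) (at t)" by simp
qed

theorem theorem9:
  fixes l h \<psi> \<phi> \<theta> :: real
  assumes "h > 0"
    and "\<phi> \<noteq> 0"
    and "1 - \<phi> * l * \<theta> \<noteq> 0"
    and "(\<psi> + \<phi> * l * (1 - \<theta>)) / (1 - \<phi> * l * \<theta>) = exp (l * h)"
    and "\<phi> * ((1 - \<theta> + \<psi> * \<theta>) / (1 - \<phi> * l * \<theta>)\<^sup>2) = h * exp (l * h)"
  shows "exact_scheme (theta_scheme_seq \<psi> \<phi> \<theta> (J5 l)) h (J5 l)"
proof -
  define E where "E = exp (l * h)"
  have A4: "\<psi> + \<phi> * l * (1 - \<theta>) = E * (1 - \<phi> * l * \<theta>)"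
    using assms(3,4) unfolding E_def by (simp add: field_simps)
  have A5: "\<phi> * ((1 - \<theta> + \<psi> * \<theta>) / (1 - \<phi> * l * \<theta>)\<^sup>2) = h * E"
    using assms(5) unfolding E_def .
  note S = scheme_step[OF assms(2,3) A4 A5]
  have seqiff: "theta_scheme_seq \<psi> \<phi> \<theta> (J5 l) xs \<longleftrightarrow>
     (\<forall>k. xs (Suc k) $ 1 = E * xs k $ 1 + h * E * xs k $ 2 \<and> xs (Suc k) $ 2 = E * xs k $ 2
       \<and> xs (Suc k) $ 3 = E * xs k $ 3)" for xs
    unfolding theta_scheme_seq_def using S by blast
  have solstep: "sol l x0 (real (Suc k) * h) $ 1 = E * sol l x0 (real k * h) $ 1 + h * E * sol l x0 (real k * h) $ 2
     \<and> sol l x0 (real (Suc k) * h) $ 2 = E * sol l x0 (real k * h) $ 2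
     \<and> sol l x0 (real (Suc k) * h) $ 3 = E * sol l x0 (real k * h) $ 3" for x0 k
  proof -
    have g: "sol l x0 (s + h) $ 1 = E * sol l x0 s $ 1 + h * E * sol l x0 s $ 2
     \<and> sol l x0 (s + h) $ 2 = E * sol l x0 s $ 2
     \<and> sol l x0 (s + h) $ 3 = E * sol l x0 s $ 3" for s
    proof -
      have e: "exp (h * l + l * s) = E * exp (l * s)"
        unfolding E_def by (simp add: distrib_left flip: exp_add)
      show ?thesis unfolding sol_def by (simp add: algebra_simps) (simp add: e algebra_simps)
    qed
    have r: "real (Suc k) * h = real k * h + h" by (simp add: algebra_simps)
    show ?thesis unfolding r by (rule g)
  qed
  show ?thesis
    unfolding exact_scheme_def
  proof (rule allI, intro conjI)
    fix x0
    show "\<exists>x. ode_solution (J5 l) x0 x" using sol_ode by blast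
    show "\<exists>xs. xs 0 = x0 \<and> theta_scheme_seq \<psi> \<phi> \<theta> (J5 l) xs"
      by (rule exI[of _ "\<lambda>k. sol l x0 (real k * h)"]) (simp add: seqiff solstep del: of_nat_Suc, simp add: sol_def)
    show "\<forall>xs x. xs 0 = x0 \<and> theta_scheme_seq \<psi> \<phi> \<theta> (J5 l) xs \<and> ode_solution (J5 l) x0 x \<longrightarrow>
          (\<forall>k. xs k = x (real k * h))"
    proof (intro allI impI)
      fix xs x k
      assume H: "xs 0 = x0 \<and> theta_scheme_seq \<psi> \<phi> \<theta> (J5 l) xs \<and> ode_solution (J5 l) x0 x"
      have xe: "x = sol l x0" using ode_unique[of l x0 x] H by (auto simp: sol_def)
      have R: "\<forall>k. xs (Suc k) $ 1 = E * xs k $ 1 + h * E * xs k $ 2 \<and> xs (Suc k) $ 2 = E * xs k $ 2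
       \<and> xs (Suc k) $ 3 = E * xs k $ 3" using H seqiff by blast
      show "xs k = x (real k * h)"
      proof (induction k)
        case 0 then show ?case using H xe by (simp add: sol_def)
      next
        case (Suc k)
        then show ?case using R[rule_format, of k] solstep[of x0 k] unfolding xe
          by (simp add: vec_eq_iff forall_3)
      qed
    qed
  qed
qed

end
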